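(* Let $SO$ be an inflationary semi-overlap function and define $I_{SO}:[0,1]^2\to[0,1]$ by $I_{SO}(u,v)=\sup\{w\in[0,1]\mid SO(u,w)\le v\}$. Then $I_{SO}$ is a fuzzy implication, and $SO$ and $I_{SO}$ satisfy the residuation property: for all $u,v,w\in[0,1]$, $SO(u,w)\le v \iff I_{SO}(u,v)\ge w$.
   Context: A semi-overlap function is a function $SO:[0,1]^2\to[0,1]$ such that for all $u,v\in[0,1]$: (S1) $SO(u,v)=SO(v,u)$; (S2) if $uv=0$ then $SO(u,v)=0$; (S3) if $uv=1$ then $SO(u,v)=1$; (S4) $SO$ is increasing in each variable; (S5) $SO$ is left-continuous, meaning that for every $u\in[0,1]$ and every nonempty family $\{v_i\mid i\in I\}\subseteq[0,1]$, $SO(u,\sup_{i\in I}v_i)=\sup_{i\in I}SO(u,v_i)$. It is inflationary if $SO(u,1)\ge u$ for all $u$. A fuzzy implication is a function $I:[0,1]^2\to[0,1]$ such that: $u\le v$ implies $I(v,w)\le I(u,w)$; $v\le w$ implies $I(u,v)\le I(u,w)$; $I(0,0)=1$; $I(1,1)=1$; $I(1,0)=0$. *)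

theory Defs
  imports Main "HOL.Real"
begin

text \<open>Functions on the unit square are modelled as real => real => real; all
conditions are required only on [0,1].\<close>

definition semi_overlap :: "(real \<Rightarrow> real \<Rightarrow> real) \<Rightarrow> bool" where
  "semi_overlap SO \<longleftrightarrow>
     (\<forall>u\<in>{0..1}. \<forall>v\<in>{0..1}. SO u v \<in> {0..1}) \<and>
     (\<forall>u\<in>{0..1}. \<forall>v\<in>{0..1}. SO u v = SO v u) \<and>
     (\<forall>u\<in>{0..1}. \<forall>v\<in>{0..1}. u * v = 0 \<longrightarrow> SO u v = 0) \<and>
     (\<forall>u\<in>{0..1}. \<forall>v\<in>{0..1}. u * v = 1 \<longrightarrow> SO u v = 1) \<and>
     (\<forall>u\<in>{0..1}. \<forall>v\<in>{0..1}. \<forall>w\<in>{0..1}. v \<le> w \<longrightarrow> SO u v \<le> SO u w) \<and>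
     (\<forall>u\<in>{0..1}. \<forall>V. V \<noteq> {} \<and> V \<subseteq> {0..1} \<longrightarrow>
        SO u (Sup V) = Sup (SO u ` V))"

definition inflationary :: "(real \<Rightarrow> real \<Rightarrow> real) \<Rightarrow> bool" where
  "inflationary SO \<longleftrightarrow> (\<forall>u\<in>{0..1}. SO u 1 \<ge> u)"

definition fuzzy_implication :: "(real \<Rightarrow> real \<Rightarrow> real) \<Rightarrow> bool" where
  "fuzzy_implication I \<longleftrightarrow>
     (\<forall>u\<in>{0..1}. \<forall>v\<in>{0..1}. I u v \<in> {0..1}) \<and>
     (\<forall>u\<in>{0..1}. \<forall>v\<in>{0..1}. \<forall>w\<in>{0..1}. u \<le> v \<longrightarrow> I v w \<le> I u w) \<and>
     (\<forall>u\<in>{0..1}. \<forall>v\<in>{0..1}. \<forall>w\<in>{0..1}. v \<le> w \<longrightarrow> I u v \<le> I u w) \<and>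
     I 0 0 = 1 \<and> I 1 1 = 1 \<and> I 1 0 = 0"

definition residual_impl :: "(real \<Rightarrow> real \<Rightarrow> real) \<Rightarrow> real \<Rightarrow> real \<Rightarrow> real" where
  "residual_impl SO u v = Sup {w \<in> {0..1}. SO u w \<le> v}"

end

theory Submission
  imports Defs
begin

lemma key:
  fixes SO :: "real \<Rightarrow> real \<Rightarrow> real"
  assumes so: "semi_overlap SO" and u: "u \<in> {0..1}" and v: "v \<in> {0..1}"
  shows "residual_impl SO u v \<in> {0..1} \<and> SO u (residual_impl SO u v) \<le> v \<and>
         (\<forall>w\<in>{0..1}. SO u w \<le> v \<longrightarrow> w \<le> residual_impl SO u v)"
proof -
  define S where "S = {w \<in> {0..1}. SO u w \<le> v}"
  have r: "residual_impl SO u v = Sup S" by (simp add: residual_impl_def S_def)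
  have zz: "\<forall>u\<in>{0..1}. \<forall>v\<in>{0..1}. u * v = 0 \<longrightarrow> SO u v = 0"
    using so unfolding semi_overlap_def by blast
  have "\<forall>v\<in>{0..1}. u * v = 0 \<longrightarrow> SO u v = 0" using zz u by blast
  hence "u * 0 = 0 \<longrightarrow> SO u 0 = 0" by (rule bspec) simp
  hence "SO u 0 = 0" by simp
  hence z: "0 \<in> S" using v by (simp add: S_def)
  have sub: "S \<subseteq> {0..1}" by (auto simp: S_def)
  have bdd: "bdd_above S" using sub by (meson bdd_above_Icc bdd_above_mono)
  have ub: "\<And>w. w \<in> S \<Longrightarrow> w \<le> Sup S" using bdd by (simp add: cSup_upper)
  have s0: "0 \<le> Sup S" using ub z by blast
  have s1: "Sup S \<le> 1" using z sub by (intro cSup_least) auto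
  have "SO u (Sup S) = Sup (SO u ` S)" using so u z sub unfolding semi_overlap_def by blast
  also have "\<dots> \<le> v"
  proof (rule cSup_least)
    show "SO u ` S \<noteq> {}" using z by blast
  next
    fix x assume "x \<in> SO u ` S" thus "x \<le> v" by (auto simp: S_def)
  qed
  finally have "SO u (Sup S) \<le> v" .
  moreover have "\<forall>w\<in>{0..1}. SO u w \<le> v \<longrightarrow> w \<le> Sup S" using ub by (auto simp: S_def)
  ultimately show ?thesis using r s0 s1 by simp
qed

lemma resid:
  fixes SO :: "real \<Rightarrow> real \<Rightarrow> real"
  assumes so: "semi_overlap SO" and u: "u \<in> {0..1}" and v: "v \<in> {0..1}" and w: "w \<in> {0..1}"
  shows "SO u w \<le> v \<longleftrightarrow> residual_impl SO u v \<ge> w"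
proof
  assume "SO u w \<le> v" thus "residual_impl SO u v \<ge> w" using key[OF so u v] w by blast
next
  assume h: "residual_impl SO u v \<ge> w"
  have mono: "\<forall>u\<in>{0..1}. \<forall>v\<in>{0..1}. \<forall>w\<in>{0..1}. v \<le> w \<longrightarrow> SO u v \<le> SO u w"
    using so unfolding semi_overlap_def by blast
  have "SO u w \<le> SO u (residual_impl SO u v)" using key[OF so u v] mono u w h by auto
  thus "SO u w \<le> v" using key[OF so u v] by linarith
qed

theorem proposition3p9:
  fixes SO :: "real \<Rightarrow> real \<Rightarrow> real"
  assumes "semi_overlap SO" and "inflationary SO"
  shows "fuzzy_implication (residual_impl SO) \<and>
         (\<forall>u\<in>{0..1}. \<forall>v\<in>{0..1}. \<forall>w\<in>{0..1}.
            SO u w \<le> v \<longleftrightarrow> residual_impl SO u v \<ge> w)"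
proof -
  note so = assms(1)
  note D = so[unfolded semi_overlap_def]
  note sym = D[THEN conjunct2, THEN conjunct1]
  note zero = D[THEN conjunct2, THEN conjunct2, THEN conjunct1]
  note one = D[THEN conjunct2, THEN conjunct2, THEN conjunct2, THEN conjunct1]
  note mono = D[THEN conjunct2, THEN conjunct2, THEN conjunct2, THEN conjunct2, THEN conjunct1]
  have R: "\<forall>u\<in>{0..1}. \<forall>v\<in>{0..1}. \<forall>w\<in>{0..1}.
            SO u w \<le> v \<longleftrightarrow> residual_impl SO u v \<ge> w" using resid[OF so] by blast
  have a1: "\<forall>u\<in>{0..1}. \<forall>v\<in>{0..1}. residual_impl SO u v \<in> {0..1}" using key[OF so] by blast
  have a2: "\<forall>u\<in>{0..1}. \<forall>v\<in>{0..1}. \<forall>w\<in>{0..1}. u \<le> v \<longrightarrow>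
      residual_impl SO v w \<le> residual_impl SO u w"
  proof (intro ballI impI)
    fix u v w :: real assume u: "u \<in> {0..1}" and v: "v \<in> {0..1}" and w: "w \<in> {0..1}" and uv: "u \<le> v"
    define z where "z = residual_impl SO v w"
    have z: "z \<in> {0..1}" "SO v z \<le> w" using key[OF so v w] by (auto simp: z_def)
    have "SO u z = SO z u" using sym[rule_format, of u z] u z by simp
    also have "\<dots> \<le> SO z v" using mono u v z uv by blast
    also have "\<dots> = SO v z" using sym[rule_format, of z v] v z by simp
    finally have "SO u z \<le> w" using z by linarith
    thus "residual_impl SO v w \<le> residual_impl SO u w" using R u w z unfolding z_def by blast
  qed
  have a3: "\<forall>u\<in>{0..1}. \<forall>v\<in>{0..1}. \<forall>w\<in>{0..1}. v \<le> w \<longrightarrow>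
      residual_impl SO u v \<le> residual_impl SO u w"
  proof (intro ballI impI)
    fix u v w :: real assume u: "u \<in> {0..1}" and v: "v \<in> {0..1}" and w: "w \<in> {0..1}" and vw: "v \<le> w"
    define z where "z = residual_impl SO u v"
    have z: "z \<in> {0..1}" "SO u z \<le> v" using key[OF so u v] by (auto simp: z_def)
    hence "SO u z \<le> w" using vw by linarith
    thus "residual_impl SO u v \<le> residual_impl SO u w" using R u w z unfolding z_def by blast
  qed
  have i00: "residual_impl SO 0 0 = 1"
  proof -
    have "SO 0 1 = 0" using zero[rule_format, of 0 1] by simp
    hence "residual_impl SO 0 0 \<ge> 1" using resid[OF so, of 0 0 1] by simp
    thus ?thesis using key[OF so, of 0 0] by simp
  qed
  have i11: "residual_impl SO 1 1 = 1"
  proof -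
    have "SO 1 1 = 1" using one[rule_format, of 1 1] by simp
    hence "residual_impl SO 1 1 \<ge> 1" using resid[OF so, of 1 1 1] by simp
    thus ?thesis using key[OF so, of 1 1] by simp
  qed
  have i10: "residual_impl SO 1 0 = 0"
  proof -
    define z where "z = residual_impl SO 1 0"
    have z: "z \<in> {0..1}" "SO 1 z \<le> 0" using key[OF so, of 1 0] by (auto simp: z_def)
    have "SO z 1 \<ge> z" using assms(2) z unfolding inflationary_def by blast
    moreover have "SO 1 z = SO z 1" using sym[rule_format, of 1 z] z by simp
    ultimately have "z \<le> 0" using z by linarith
    thus ?thesis using z unfolding z_def by simp
  qed
  have F: "fuzzy_implication (residual_impl SO)"
    unfolding fuzzy_implication_def using a1 a2 a3 i00 i11 i10 by (intro conjI)
  from F R show ?thesis by (rule conjI)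
qed

end
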